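(* Let $\Phi \in \mathbb{R}^{M \times N}$, let $\Lambda \subset \{1, 2, \dots, N\}$, and let $\widetilde{x} \in \mathbb{R}^N$ with $\mathrm{supp}(\widetilde{x}) \cap \Lambda = \emptyset$. Define $h = A_\Lambda^T A_\Lambda \widetilde{x}$. If $\Phi$ satisfies the restricted isometry property of order $\|\widetilde{x}\|_0 + |\Lambda| + 1$ with isometry constant $\delta$, then $$|h(j) - \widetilde{x}(j)| \le \frac{\delta}{1-\delta}\|\widetilde{x}\|_2$$ for all $j \notin \Lambda$.
   Context: For $x \in \mathbb{R}^N$, $\|x\|_0 := |\mathrm{supp}(x)|$. A matrix $\Phi \in \mathbb{R}^{M\times N}$ satisfies the restricted isometry property (RIP) of order $K$ with isometry constant $\delta \in (0,1)$ if $(1-\delta)\|x\|_2^2 \le \|\Phi x\|_2^2 \le (1+\delta)\|x\|_2^2$ for all $x \in \mathbb{R}^N$ with $\|x\|_0 \le K$. For $\Lambda \subset \{1,\dots,N\}$, $\Phi_\Lambda$ is the submatrix of $\Phi$ consisting of the columns indexed by $\Lambda$, $P_\Lambda$ is the orthogonal projection onto the column space of $\Phi_\Lambda$, $P_\Lambda^\perp = I - P_\Lambda$, and $A_\Lambda := P_\Lambda^\perp \Phi$. *)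

theory Defs
  imports "HOL-Analysis.Analysis"
begin

definition supp :: "real^'n \<Rightarrow> 'n set" where
  "supp x = {i. x $ i \<noteq> 0}"

definition l0 :: "real^'n \<Rightarrow> nat" where
  "l0 x = card (supp x)"

definition RIP :: "real^'n^'m \<Rightarrow> nat \<Rightarrow> real \<Rightarrow> bool" where
  "RIP Phi K \<delta> \<longleftrightarrow> 0 < \<delta> \<and> \<delta> < 1 \<and>
     (\<forall>x. l0 x \<le> K \<longrightarrow>
        (1 - \<delta>) * (norm x)\<^sup>2 \<le> (norm (Phi *v x))\<^sup>2 \<and>
        (norm (Phi *v x))\<^sup>2 \<le> (1 + \<delta>) * (norm x)\<^sup>2)"

definition orth_proj :: "('a::real_inner) set \<Rightarrow> 'a \<Rightarrow> 'a" where
  "orth_proj W v = (THE p. p \<in> W \<and> (\<forall>w\<in>W. inner (v - p) w = 0))"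

definition P_Lam :: "real^'n^'m \<Rightarrow> 'n set \<Rightarrow> real^'m \<Rightarrow> real^'m" where
  "P_Lam Phi Lam v = orth_proj (span {column i Phi | i. i \<in> Lam}) v"

(* A_Lambda = (I - P_Lambda) Phi, as a matrix *)
definition A_Lam :: "real^'n^'m \<Rightarrow> 'n set \<Rightarrow> real^'n^'m" where
  "A_Lam Phi Lam = (\<chi> r j. (column j Phi - P_Lam Phi Lam (column j Phi)) $ r)"

end

theory Submission
  imports Defs
begin

lemma supp_add: "supp (a + b) \<subseteq> supp a \<union> supp b"
  by (auto simp: supp_def)
lemma supp_diff: "supp (a - b) \<subseteq> supp a \<union> supp b"
  by (auto simp: supp_def)
lemma supp_scale: "supp (c *\<^sub>R a) \<subseteq> supp a"
  by (auto simp: supp_def)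
lemma l0_le: "supp w \<subseteq> S \<Longrightarrow> l0 w \<le> card S"
  unfolding l0_def by (rule card_mono) auto

lemma sq_add: "(norm (p + q))\<^sup>2 = (norm p)\<^sup>2 + 2 * (p \<bullet> q) + (norm q)\<^sup>2"
  for p q :: "'x::real_inner"
  by (simp add: power2_norm_eq_inner inner_add inner_commute)
lemma sq_diff: "(norm (p - q))\<^sup>2 = (norm p)\<^sup>2 - 2 * (p \<bullet> q) + (norm q)\<^sup>2"
  for p q :: "'x::real_inner"
  by (simp add: power2_norm_eq_inner inner_diff inner_commute)

lemma polar:
  fixes A :: "real^'n^'k" and S :: "'n set"
  assumes bnd: "\<forall>w. supp w \<subseteq> S \<longrightarrow> (1-d)*(norm w)\<^sup>2 \<le> (norm (A *v w))\<^sup>2 \<and> (norm (A *v w))\<^sup>2 \<le> (1+d)*(norm w)\<^sup>2"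
    and u: "supp u \<subseteq> S" and v: "supp v \<subseteq> S"
  shows "\<bar>(A *v u) \<bullet> (A *v v) - u \<bullet> v\<bar> \<le> d * norm u * norm v"
proof (cases "u = 0 \<or> v = 0")
  case True then show ?thesis by auto
next
  case False
  define a where "a = (1 / norm u) *\<^sub>R u"
  define b where "b = (1 / norm v) *\<^sub>R v"
  have na: "norm a = 1" and nb: "norm b = 1" using False by (auto simp: a_def b_def)
  have sa: "supp a \<subseteq> S" using u supp_scale a_def by blast
  have sb: "supp b \<subseteq> S" using v supp_scale b_def by blast
  have p: "supp (a + b) \<subseteq> S" using supp_add sa sb by blast
  have m: "supp (a - b) \<subseteq> S" using supp_diff sa sb by blast
  have b1: "(norm (A *v (a+b)))\<^sup>2 \<le> (1+d)*(norm (a+b))\<^sup>2" using bnd p by blast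
  have b2: "(1-d)*(norm (a-b))\<^sup>2 \<le> (norm (A *v (a-b)))\<^sup>2" using bnd m by blast
  have b3: "(1-d)*(norm (a+b))\<^sup>2 \<le> (norm (A *v (a+b)))\<^sup>2" using bnd p by blast
  have b4: "(norm (A *v (a-b)))\<^sup>2 \<le> (1+d)*(norm (a-b))\<^sup>2" using bnd m by blast
  have e1: "(norm (A *v (a+b)))\<^sup>2 = (norm (A *v a))\<^sup>2 + 2 * ((A *v a) \<bullet> (A *v b)) + (norm (A *v b))\<^sup>2"
    by (simp add: matrix_vector_right_distrib sq_add)
  have e2: "(norm (A *v (a-b)))\<^sup>2 = (norm (A *v a))\<^sup>2 - 2 * ((A *v a) \<bullet> (A *v b)) + (norm (A *v b))\<^sup>2"
    by (simp add: matrix_vector_mult_diff_distrib sq_diff)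
  have e3: "(norm (a+b))\<^sup>2 = 2 + 2 * (a \<bullet> b)" using sq_add[of a b] na nb by simp
  have e4: "(norm (a-b))\<^sup>2 = 2 - 2 * (a \<bullet> b)" using sq_diff[of a b] na nb by simp
  have key: "\<bar>(A *v a) \<bullet> (A *v b) - a \<bullet> b\<bar> \<le> d"
  proof -
    have "4 * ((A *v a) \<bullet> (A *v b) - a \<bullet> b) \<le> 4 * d"
      using b1 b2 e1 e2 e3 e4 by (simp add: algebra_simps)
    moreover have "4 * ((A *v a) \<bullet> (A *v b) - a \<bullet> b) \<ge> - 4 * d"
      using b3 b4 e1 e2 e3 e4 by (simp add: algebra_simps)
    ultimately show ?thesis by (simp add: abs_le_iff)
  qed
  have uu: "u = norm u *\<^sub>R a" and vv: "v = norm v *\<^sub>R b" using False by (auto simp: a_def b_def)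
  have "(A *v u) \<bullet> (A *v v) - u \<bullet> v = norm u * norm v * ((A *v a) \<bullet> (A *v b) - a \<bullet> b)"
    by (subst uu, subst vv, subst uu, subst vv) (simp add: matrix_vector_mult_scaleR algebra_simps)
  hence "\<bar>(A *v u) \<bullet> (A *v v) - u \<bullet> v\<bar> = norm u * norm v * \<bar>(A *v a) \<bullet> (A *v b) - a \<bullet> b\<bar>"
    by (simp add: abs_mult)
  also have "\<dots> \<le> norm u * norm v * d" using key by (simp add: mult_left_mono)
  finally show ?thesis by (simp add: mult_ac)
qed

lemma orth_proj_span:
  fixes S :: "(real^'m) set"
  shows "orth_proj (span S) v \<in> span S \<and> (\<forall>w\<in>span S. (v - orth_proj (span S) v) \<bullet> w = 0)"
proof -
  obtain y z where y: "y \<in> span S" and z: "\<And>w. w \<in> span S \<Longrightarrow> orthogonal z w" and vyz: "v = y + z"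
    using orthogonal_subspace_decomp_exists by blast
  have "\<exists>!p. p \<in> span S \<and> (\<forall>w\<in>span S. (v - p) \<bullet> w = 0)"
  proof
    show "y \<in> span S \<and> (\<forall>w\<in>span S. (v - y) \<bullet> w = 0)"
      using y z vyz by (auto simp: orthogonal_def)
  next
    fix p assume p: "p \<in> span S \<and> (\<forall>w\<in>span S. (v - p) \<bullet> w = 0)"
    have d: "p - y \<in> span S" using p y span_diff by blast
    have "(v - y) \<bullet> (p - y) = 0" using z d vyz by (auto simp: orthogonal_def)
    moreover have "(v - p) \<bullet> (p - y) = 0" using p d by blast
    ultimately have "(p - y) \<bullet> (p - y) = 0" by (simp add: inner_diff)
    thus "p = y" by simp
  qed
  from theI'[OF this] show ?thesis unfolding orth_proj_def .
qed

lemma span_cols_sub: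
  fixes Phi :: "real^'n^'m"
  assumes "y \<in> span {column i Phi | i. i \<in> Lam}"
  shows "\<exists>z. supp z \<subseteq> Lam \<and> y = Phi *v z"
proof -
  let ?C = "{y. \<exists>z. supp z \<subseteq> Lam \<and> y = Phi *v z}"
  have sub: "subspace ?C" unfolding subspace_def
  proof (intro conjI allI ballI impI)
    show "0 \<in> ?C"
      by (auto intro!: exI[of _ 0] simp: supp_def)
  next
    fix x y assume "x \<in> ?C" "y \<in> ?C"
    then obtain z1 z2 where "supp z1 \<subseteq> Lam" "x = Phi *v z1" "supp z2 \<subseteq> Lam" "y = Phi *v z2" by auto
    then show "x + y \<in> ?C"
      using supp_add[of z1 z2] by (auto intro!: exI[of _ "z1+z2"] simp: matrix_vector_right_distrib)
  next
    fix c x assume "x \<in> ?C"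
    then obtain z1 where "supp z1 \<subseteq> Lam" "x = Phi *v z1" by auto
    then show "c *\<^sub>R x \<in> ?C"
      using supp_scale[of c z1] by (auto intro!: exI[of _ "c *\<^sub>R z1"] simp: matrix_vector_mult_scaleR)
  qed
  have base: "{column i Phi | i. i \<in> Lam} \<subseteq> ?C"
  proof
    fix x assume "x \<in> {column i Phi | i. i \<in> Lam}"
    then obtain i where i: "i \<in> Lam" "x = column i Phi" by blast
    show "x \<in> ?C"
    proof (intro CollectI exI conjI)
      show "supp (axis i 1) \<subseteq> Lam" using i(1) by (auto simp: supp_def axis_def split: if_splits)
      show "x = Phi *v axis i 1" by (simp add: i(2) matrix_vector_mult_basis)
    qed
  qed
  show ?thesis using span_minimal[OF base sub] assms by blast
qed

lemma span_cols_sup: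
  fixes Phi :: "real^'n^'m"
  assumes "supp z \<subseteq> Lam"
  shows "Phi *v z \<in> span {column i Phi | i. i \<in> Lam}"
proof -
  have "Phi *v z = (\<Sum>i\<in>UNIV. z$i *\<^sub>R column i Phi)"
    by (simp add: matrix_mult_sum scalar_mult_eq_scaleR)
  also have "\<dots> \<in> span {column i Phi | i. i \<in> Lam}"
  proof (rule span_sum)
    fix i :: 'n
    show "z$i *\<^sub>R column i Phi \<in> span {column i Phi | i. i \<in> Lam}"
    proof (cases "i \<in> Lam")
      case True then show ?thesis by (intro span_mul span_base) blast
    next
      case False then have "z$i = 0" using assms by (auto simp: supp_def)
      then show ?thesis by (simp add: span_zero)
    qed
  qed
  finally show ?thesis .
qed

lemma A_col: "column j (A_Lam Phi Lam) = column j Phi - P_Lam Phi Lam (column j Phi)"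
  by (simp add: A_Lam_def column_def vec_eq_iff)

lemma A_facts:
  fixes Phi :: "real^'n^'m"
  shows "\<exists>z. supp z \<subseteq> Lam \<and> Phi *v v - A_Lam Phi Lam *v v = Phi *v z"
    and "\<forall>w\<in>span {column i Phi | i. i \<in> Lam}. (A_Lam Phi Lam *v v) \<bullet> w = 0"
proof -
  let ?W = "span {column i Phi | i. i \<in> Lam}"
  let ?P = "P_Lam Phi Lam"
  have PW: "?P y \<in> ?W" and Po: "\<forall>w\<in>?W. (y - ?P y) \<bullet> w = 0" for y
    using orth_proj_span[of "{column i Phi | i. i \<in> Lam}" y] by (auto simp: P_Lam_def)
  have Av: "A_Lam Phi Lam *v v = (\<Sum>j\<in>UNIV. v$j *\<^sub>R (column j Phi - ?P (column j Phi)))"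
    by (simp add: matrix_mult_sum scalar_mult_eq_scaleR A_col)
  have "Phi *v v - A_Lam Phi Lam *v v = (\<Sum>j\<in>UNIV. v$j *\<^sub>R ?P (column j Phi))"
    unfolding Av by (simp add: matrix_mult_sum scalar_mult_eq_scaleR sum_subtractf[symmetric] scaleR_diff_right)
  also have "\<dots> \<in> ?W" by (intro span_sum span_mul PW)
  finally show "\<exists>z. supp z \<subseteq> Lam \<and> Phi *v v - A_Lam Phi Lam *v v = Phi *v z"
    using span_cols_sub by blast
  show "\<forall>w\<in>?W. (A_Lam Phi Lam *v v) \<bullet> w = 0"
    unfolding Av using Po by (simp add: inner_sum_left)
qed

lemma inner_disj: "supp w \<inter> supp z = {} \<Longrightarrow> w \<bullet> z = 0"
  for w z :: "real^'n"
  unfolding inner_vec_def supp_def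
  by (rule sum.neutral) (auto simp: disjoint_iff)

lemma A_bound:
  fixes Phi :: "real^'n^'m"
  assumes rip: "RIP Phi K \<delta>" and TL: "T \<inter> Lam = {}" and cK: "card T + card Lam \<le> K"
    and w: "supp w \<subseteq> T"
  shows "(1 - \<delta>/(1-\<delta>))*(norm w)\<^sup>2 \<le> (norm (A_Lam Phi Lam *v w))\<^sup>2 \<and>
         (norm (A_Lam Phi Lam *v w))\<^sup>2 \<le> (1 + \<delta>/(1-\<delta>))*(norm w)\<^sup>2"
proof -
  have d0: "0 < \<delta>" and d1: "\<delta> < 1" using rip by (auto simp: RIP_def)
  have ripb: "(1 - \<delta>) * (norm y)\<^sup>2 \<le> (norm (Phi *v y))\<^sup>2 \<and> (norm (Phi *v y))\<^sup>2 \<le> (1 + \<delta>) * (norm y)\<^sup>2"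
    if "l0 y \<le> K" for y using rip that by (auto simp: RIP_def)
  obtain z where sz: "supp z \<subseteq> Lam" and ez: "Phi *v w - A_Lam Phi Lam *v w = Phi *v z"
    using A_facts(1) by blast
  define Aw where "Aw = A_Lam Phi Lam *v w"
  define Fw where "Fw = Phi *v w"
  define Fz where "Fz = Phi *v z"
  have AwF: "Aw = Fw - Fz" using ez by (simp add: Aw_def Fw_def Fz_def algebra_simps)
  have o: "Aw \<bullet> Fz = 0" using A_facts(2)[of Phi Lam w] span_cols_sup[OF sz, of Phi] by (auto simp: Aw_def Fz_def)
  hence o2: "Fw \<bullet> Fz = Fz \<bullet> Fz" using AwF by (simp add: inner_diff_left)
  have nA: "(norm Aw)\<^sup>2 = (norm Fw)\<^sup>2 - (norm Fz)\<^sup>2"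
    using AwF o2 by (simp add: power2_norm_eq_inner inner_diff inner_commute)
  have fT: "finite (T \<union> Lam)" by simp
  have cTL: "card (T \<union> Lam) \<le> K" using card_Un_le[of T Lam] cK by linarith
  have bndTL: "\<forall>y. supp y \<subseteq> T \<union> Lam \<longrightarrow> (1-\<delta>)*(norm y)\<^sup>2 \<le> (norm (Phi *v y))\<^sup>2 \<and> (norm (Phi *v y))\<^sup>2 \<le> (1+\<delta>)*(norm y)\<^sup>2"
    using ripb l0_le cTL by (meson le_trans)
  have no: "\<bar>Fw \<bullet> Fz - w \<bullet> z\<bar> \<le> \<delta> * norm w * norm z"
    using polar[OF bndTL, of w z] w sz by (auto simp: Fw_def Fz_def)
  have wz: "w \<bullet> z = 0" using inner_disj[of w z] w sz TL by blast
  have rz: "(1 - \<delta>) * (norm z)\<^sup>2 \<le> (norm Fz)\<^sup>2"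
    using ripb[of z] l0_le[OF sz] cK unfolding Fz_def by linarith
  have rw: "(1 - \<delta>) * (norm w)\<^sup>2 \<le> (norm Fw)\<^sup>2 \<and> (norm Fw)\<^sup>2 \<le> (1 + \<delta>) * (norm w)\<^sup>2"
    using ripb[of w] l0_le[OF w] cK unfolding Fw_def by linarith
  define a where "a = (norm Fz)\<^sup>2"
  have a0: "0 \<le> a" by (simp add: a_def)
  have aw: "a \<le> \<delta> * norm w * norm z"
    using no wz o2 by (simp add: a_def power2_norm_eq_inner)
  have abound: "a \<le> \<delta>\<^sup>2 * (norm w)\<^sup>2 / (1 - \<delta>)"
  proof (cases "a = 0")
    case True then show ?thesis using d1 by simp
  next
    case False
    hence apos: "0 < a" using a0 by simp
    have "a\<^sup>2 \<le> (\<delta> * norm w * norm z)\<^sup>2"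
      using aw a0 by (simp add: power_mono)
    also have "\<dots> = \<delta>\<^sup>2 * (norm w)\<^sup>2 * (norm z)\<^sup>2" by (simp add: power_mult_distrib)
    also have "\<dots> \<le> \<delta>\<^sup>2 * (norm w)\<^sup>2 * (a / (1 - \<delta>))"
    proof (rule mult_left_mono)
      show "(norm z)\<^sup>2 \<le> a / (1 - \<delta>)" using rz d1 by (simp add: a_def pos_le_divide_eq mult.commute)
    qed simp
    finally have "a * a \<le> a * (\<delta>\<^sup>2 * (norm w)\<^sup>2 / (1 - \<delta>))"
      by (simp add: power2_eq_square algebra_simps)
    thus ?thesis using apos by (metis mult_le_cancel_left_pos times_divide_eq_right)
  qed
  have eqd: "(1 - \<delta>) - \<delta>\<^sup>2 / (1 - \<delta>) = 1 - \<delta>/(1-\<delta>)"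
    using d1 by (simp add: field_simps power2_eq_square)
  have low: "(1 - \<delta>/(1-\<delta>))*(norm w)\<^sup>2 \<le> (norm Aw)\<^sup>2"
  proof -
    have "(1 - \<delta>/(1-\<delta>))*(norm w)\<^sup>2 = (1 - \<delta>) * (norm w)\<^sup>2 - \<delta>\<^sup>2 * (norm w)\<^sup>2 / (1 - \<delta>)"
      by (simp add: eqd[symmetric] algebra_simps)
    also have "\<dots> \<le> (norm Fw)\<^sup>2 - a" using rw abound by linarith
    finally show ?thesis using nA a_def by simp
  qed
  have dd: "\<delta> \<le> \<delta>/(1-\<delta>)" using d0 d1 by (simp add: le_divide_eq)
  have "(1 + \<delta>) * (norm w)\<^sup>2 \<le> (1 + \<delta>/(1-\<delta>))*(norm w)\<^sup>2"
    using dd by (intro mult_right_mono) auto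
  hence up: "(norm Aw)\<^sup>2 \<le> (1 + \<delta>/(1-\<delta>))*(norm w)\<^sup>2" using nA rw zero_le_power2[of "norm Fz"] by linarith
  show ?thesis using low up by (simp add: Aw_def)
qed

lemma transp_col: "(transpose M *v y) $ j = column j M \<bullet> y"
  for M :: "real^'n^'m"
  by (simp add: matrix_vector_mult_def transpose_def inner_vec_def column_def mult.commute)

theorem lemma3:
  fixes Phi :: "real^'n^'m" and Lam :: "'n set" and x :: "real^'n" and \<delta> :: real
  assumes "supp x \<inter> Lam = {}"
    and "RIP Phi (l0 x + card Lam + 1) \<delta>"
  shows "\<forall>j. j \<notin> Lam \<longrightarrow>
    \<bar>(transpose (A_Lam Phi Lam) *v (A_Lam Phi Lam *v x)) $ j - x $ j\<bar> \<le> \<delta> / (1 - \<delta>) * norm x"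
proof (intro allI impI)
  fix j assume j: "j \<notin> Lam"
  define T where "T = insert j (supp x)"
  have TL: "T \<inter> Lam = {}" using assms(1) j by (auto simp: T_def)
  have cT: "card T \<le> l0 x + 1" unfolding T_def l0_def by (simp add: card_insert_le_m1 card_insert_if)
  have cK: "card T + card Lam \<le> l0 x + card Lam + 1" using cT by linarith
  have bnd: "\<forall>w. supp w \<subseteq> T \<longrightarrow> (1 - \<delta>/(1-\<delta>))*(norm w)\<^sup>2 \<le> (norm (A_Lam Phi Lam *v w))\<^sup>2 \<and>
         (norm (A_Lam Phi Lam *v w))\<^sup>2 \<le> (1 + \<delta>/(1-\<delta>))*(norm w)\<^sup>2"
    using A_bound[OF assms(2) TL cK] by blast
  have se: "supp (axis j (1::real)) \<subseteq> T" by (auto simp: supp_def axis_def T_def split: if_splits)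
  have sx: "supp x \<subseteq> T" by (auto simp: T_def)
  have P: "\<bar>(A_Lam Phi Lam *v axis j 1) \<bullet> (A_Lam Phi Lam *v x) - axis j 1 \<bullet> x\<bar> \<le> \<delta>/(1-\<delta>) * norm (axis j (1::real)) * norm x"
    by (rule polar[OF bnd se sx])
  have h: "(transpose (A_Lam Phi Lam) *v (A_Lam Phi Lam *v x)) $ j = (A_Lam Phi Lam *v axis j 1) \<bullet> (A_Lam Phi Lam *v x)"
    unfolding matrix_vector_mult_basis by (rule transp_col)
  have ex: "axis j 1 \<bullet> x = x $ j" by (simp add: inner_axis')
  show "\<bar>(transpose (A_Lam Phi Lam) *v (A_Lam Phi Lam *v x)) $ j - x $ j\<bar> \<le> \<delta> / (1 - \<delta>) * norm x"
    using P h ex by simp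
qed

end
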